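(* Let $m$ be a positive integer. There do not exist complex numbers $c_0,c_1,\dots,c_{2m-1}$ such that, identically as meromorphic functions of $s\in\mathbb{C}$, $$\zeta(-2m,s+2m)+c_{2m-1}\zeta(-2m+1,s+2m-1)+c_{2m-2}\zeta(-2m+2,s+2m-2)+\cdots+c_2\zeta(-2,s+2)+c_1\zeta(-1,s+1)+c_0\,\zeta(0,s)/2\equiv0.$$
   Context: For an integer $c\ge 0$, $\zeta(-c,s+c)$ denotes the Euler–Zagier double zeta function $\zeta(s_1,s_2)=\sum_{1\le n_1<n_2} n_1^{-s_1}n_2^{-s_2}$ evaluated at $(s_1,s_2)=(-c,s+c)$; i.e. it is the meromorphic continuation to all $s\in\mathbb{C}$ of the series $\sum_{m,n\ge1} m^{c}(m+n)^{-s-c}$, which converges absolutely for $\Re(s)>2$. *)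

theory Defs
  imports "HOL-Complex_Analysis.Complex_Analysis"
begin

text \<open>The Dirichlet series  sum over m,n >= 1 of m^c (m+n)^(-s-c), i.e. the
  Euler--Zagier double zeta value zeta(-c, s+c) in its region of absolute
  convergence Re s > 2.\<close>
definition dz_series :: "nat \<Rightarrow> complex \<Rightarrow> complex" where
  "dz_series c s =
     (\<Sum>\<^sub>\<infinity>(m,n)\<in>{1::nat..} \<times> {1::nat..}.
        of_nat m ^ c * of_nat (m + n) powr (- (s + of_nat c)))"

text \<open>f is a (the) meromorphic continuation to all of C of s |-> zeta(-c, s+c).
  (Meromorphic functions are only determined up to their values at isolated points.)\<close>
definition is_dz_continuation :: "nat \<Rightarrow> (complex \<Rightarrow> complex) \<Rightarrow> bool" where
  "is_dz_continuation c f \<longleftrightarrow>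
     f meromorphic_on UNIV \<and> (\<forall>s. Re s > 2 \<longrightarrow> f s = dz_series c s)"

end

theory Submission
  imports Defs
begin

fun bn :: "nat \<Rightarrow> real" where
  "bn n = (if n = 0 then 1 else - (\<Sum>k<n. of_nat (Suc n choose k) * bn k) / of_nat (Suc n))"
declare bn.simps[simp del]

lemma bn0[simp]: "bn 0 = 1" by (simp add: bn.simps)
lemma bn1[simp]: "bn (Suc 0) = -1/2" by (simp add: bn.simps)

lemma smult_sum_right: "smult c (sum f A) = (\<Sum>x\<in>A. smult c (f x))"
  by (induction A rule: infinite_finite_induct) (auto simp: smult_add_right)

lemma pderiv_sum': "pderiv (sum f A) = (\<Sum>x\<in>A. pderiv (f x))"
  by (induction A rule: infinite_finite_induct) (auto simp: pderiv_add)

lemma bn_rec: "(\<Sum>k<Suc p. of_nat (Suc p choose k) * bn k) = 0" if "p \<ge> 1"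
proof -
  have "bn p * of_nat (Suc p) = - (\<Sum>k<p. of_nat (Suc p choose k) * bn k)"
    using that by (subst bn.simps) (simp add: field_simps)
  then show ?thesis by (simp add: algebra_simps)
qed

definition Bp :: "nat \<Rightarrow> real poly" where
  "Bp n = (\<Sum>k\<le>n. monom (of_nat (n choose k) * bn k) (n - k))"

lemma poly_Bp: "poly (Bp n) x = (\<Sum>k\<le>n. of_nat (n choose k) * bn k * x ^ (n - k))"
  by (simp add: Bp_def poly_sum poly_monom)

lemma Bp_at0: "poly (Bp n) 0 = bn n"
proof -
  have "poly (Bp n) 0 = (\<Sum>k\<le>n. if k = n then bn n else 0)"
    unfolding poly_Bp by (intro sum.cong) auto
  then show ?thesis by simp
qed

lemma Bp_at1: "poly (Bp n) 1 = bn n" if "n \<ge> 2"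
proof -
  define p where "p = n - 1"
  have p: "n = Suc p" "p \<ge> 1" using that by (auto simp: p_def)
  have "poly (Bp n) 1 = (\<Sum>k<Suc n. of_nat (n choose k) * bn k)"
    unfolding poly_Bp by (simp add: lessThan_Suc_atMost)
  also have "\<dots> = bn n" using bn_rec[OF p(2)] p by simp
  finally show ?thesis .
qed

lemma Bp0: "Bp 0 = 1" by (simp add: Bp_def)

lemma coeff_Bp_top: "coeff (Bp n) n = 1"
proof -
  have "coeff (Bp n) n = (\<Sum>k\<le>n. if k = 0 then 1 else 0)"
    unfolding Bp_def coeff_sum coeff_monom by (intro sum.cong) auto
  then show ?thesis by simp
qed

lemma coeff_Bp_1: "coeff (Bp (Suc k)) 1 = of_nat (Suc k) * bn k"
proof -
  have "coeff (Bp (Suc k)) 1 = (\<Sum>i\<le>Suc k. if i = k then of_nat (Suc k) * bn k else 0)"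
    unfolding Bp_def coeff_sum coeff_monom by (intro sum.cong) auto
  then show ?thesis by simp
qed

lemma pderiv_Bp: "pderiv (Bp (Suc n)) = smult (of_nat (Suc n)) (Bp n)"
proof -
  have "pderiv (Bp (Suc n)) = (\<Sum>k\<le>Suc n. monom (of_nat (Suc n - k) * (of_nat (Suc n choose k) * bn k)) (n - k))"
    unfolding Bp_def pderiv_sum' pderiv_monom by simp
  also have "\<dots> = (\<Sum>k\<le>n. monom (of_nat (Suc n - k) * (of_nat (Suc n choose k) * bn k)) (n - k))"
    by (simp add: sum.atMost_Suc)
  also have "\<dots> = (\<Sum>k\<le>n. smult (of_nat (Suc n)) (monom (of_nat (n choose k) * bn k) (n - k)))"
  proof (intro sum.cong refl)
    fix k assume "k \<in> {..n}"
    have "(Suc n - k) * (Suc n choose k) = Suc n * (n choose k)"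
      using binomial_absorb_comp[of "Suc n" k] by simp
    then have "real (Suc n - k) * real (Suc n choose k) = real (Suc n) * real (n choose k)"
      by (metis of_nat_mult)
    then show "monom (of_nat (Suc n - k) * (of_nat (Suc n choose k) * bn k)) (n - k) =
          smult (of_nat (Suc n)) (monom (of_nat (n choose k) * bn k) (n - k))"
      by (simp add: smult_monom mult.assoc[symmetric])
  qed
  also have "\<dots> = smult (of_nat (Suc n)) (Bp n)"
    by (simp add: Bp_def smult_sum_right)
  finally show ?thesis .
qed

lemma pow_aux: "real k * (x ^ (k - Suc 0) * x) = real k * x ^ k"
  by (cases k) auto

lemma Bp_diff: "poly (Bp (Suc k)) (x + 1) - poly (Bp (Suc k)) x = of_nat (Suc k) * x ^ k"
proof (induction k arbitrary: x)
  case 0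
  show ?case by (simp add: poly_Bp)
next
  case (Suc k)
  define D where "D x = poly (Bp (Suc (Suc k))) (x + 1) - poly (Bp (Suc (Suc k))) x
       - of_nat (Suc (Suc k)) * x ^ Suc k" for x
  have "DERIV D x :> 0" for x
  proof -
    have e: "poly (pderiv (Bp (Suc (Suc k)))) (x + 1) * 1 - poly (pderiv (Bp (Suc (Suc k)))) x
        - of_nat (Suc (Suc k)) * (of_nat (Suc k) * x ^ k) = 
        of_nat (Suc (Suc k)) * (poly (Bp (Suc k)) (x + 1) - poly (Bp (Suc k)) x - of_nat (Suc k) * x ^ k)"
      by (simp only: pderiv_Bp poly_smult) (simp add: algebra_simps)
    have d1: "DERIV (\<lambda>x. x ^ Suc k) x :> of_nat (Suc k) * x ^ k"
      using DERIV_pow[of "Suc k" x] by simp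
    have d2: "DERIV (\<lambda>x. poly (Bp (Suc (Suc k))) (x + 1)) x :> poly (pderiv (Bp (Suc (Suc k)))) (x + 1) * 1"
      by (rule DERIV_chain2[OF poly_DERIV]) (auto intro!: derivative_eq_intros)
    have "DERIV D x :> (poly (pderiv (Bp (Suc (Suc k)))) (x + 1) * 1 - poly (pderiv (Bp (Suc (Suc k)))) x
        - of_nat (Suc (Suc k)) * (of_nat (Suc k) * x ^ k))"
      unfolding D_def by (intro DERIV_diff d2 poly_DERIV DERIV_cmult d1)
    then show ?thesis unfolding e using Suc.IH[of x] by simp
  qed
  then have "D x = D 0" by (intro DERIV_isconst_all) auto
  also have "D 0 = 0" unfolding D_def using Bp_at1[of "Suc (Suc k)"] Bp_at0[of "Suc (Suc k)"] by simp
  finally show ?case unfolding D_def by simp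
qed

lemma sum_powers_Bp: "(\<Sum>j<n. real j ^ k) = (poly (Bp (Suc k)) (real n) - bn (Suc k)) / of_nat (Suc k)"
proof (induction n)
  case 0
  then show ?case by (simp add: Bp_at0[symmetric])
next
  case (Suc n)
  have "poly (Bp (Suc k)) (real (Suc n)) = poly (Bp (Suc k)) (real n) + of_nat (Suc k) * real n ^ k"
    using Bp_diff[of k "real n"] by (simp add: add.commute)
  then show ?case using Suc.IH by (simp add: field_simps del: of_nat_Suc)
qed

lemma ftc_poly: "(poly (pderiv Q) has_integral (poly Q 1 - poly Q (0::real))) {0..1}"
proof (rule fundamental_theorem_of_calculus)
  fix x :: real assume "x \<in> {0..1}"
  show "(poly Q has_vector_derivative poly (pderiv Q) x) (at x within {0..1})"
    using poly_DERIV[of Q x]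
    by (simp add: has_real_derivative_iff_has_vector_derivative has_vector_derivative_at_within)
qed simp

lemma int_Bp: "(poly (Bp (Suc n)) has_integral 0) {0..1}"
proof -
  have "(poly (pderiv (Bp (Suc (Suc n)))) has_integral 0) {0..1}"
    using ftc_poly[of "Bp (Suc (Suc n))"] Bp_at0[of "Suc (Suc n)"] Bp_at1[of "Suc (Suc n)"] by simp
  then have "((\<lambda>x. (1 / of_nat (Suc (Suc n))) * poly (pderiv (Bp (Suc (Suc n)))) x) has_integral (1 / of_nat (Suc (Suc n))) * 0) {0..1}"
    by (rule has_integral_mult_right)
  moreover have "poly (Bp (Suc n)) = (\<lambda>x. (1 / of_nat (Suc (Suc n))) * poly (pderiv (Bp (Suc (Suc n)))) x)"
    by (rule ext) (simp only: pderiv_Bp poly_smult, simp del: of_nat_Suc)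
  ultimately show ?thesis by simp
qed

lemma J_zero:
  assumes "a \<ge> 1" "b \<ge> 1" "bn (a + b) = 0"
  shows "(poly (Bp a * Bp b) has_integral 0) {0..1}"
  using assms
proof (induction a arbitrary: b)
  case 0
  then show ?case by simp
next
  case (Suc a)
  define Q where "Q = Bp (Suc a) * Bp (Suc b)"
  have eq: "poly (Bp (Suc a) * Bp b) x =
      (1 / of_nat (Suc b)) * (poly (pderiv Q) x - of_nat (Suc a) * poly (Bp a * Bp (Suc b)) x)" for x
    unfolding Q_def pderiv_mult pderiv_Bp by (simp add: field_simps)
  have I1: "(poly (pderiv Q) has_integral 0) {0..1}"
  proof -
    have "poly Q 1 = poly Q 0"
    proof (cases "a = 0")
      case True
      have "poly (Bp 1) x = x - 1/2" for x by (simp add: poly_Bp)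
      then show ?thesis using True Suc.prems Bp_at0[of "Suc b"] Bp_at1[of "Suc b"]
        by (simp add: Q_def)
    next
      case False
      then show ?thesis using Suc.prems Bp_at0 Bp_at1[of "Suc b"] Bp_at1[of "Suc a"]
        by (simp add: Q_def)
    qed
    then show ?thesis using ftc_poly[of Q] by simp
  qed
  have I2: "(poly (Bp a * Bp (Suc b)) has_integral 0) {0..1}"
  proof (cases "a = 0")
    case True
    then show ?thesis using int_Bp[of b] by (simp add: Bp0)
  next
    case False
    have "a \<ge> 1" "Suc b \<ge> 1" "bn (a + Suc b) = 0" using False Suc.prems by auto
    from Suc.IH[OF this] show ?thesis .
  qed
  have "((\<lambda>x. (1 / of_nat (Suc b)) * (poly (pderiv Q) x - of_nat (Suc a) * poly (Bp a * Bp (Suc b)) x))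
          has_integral (1 / of_nat (Suc b)) * (0 - of_nat (Suc a) * 0)) {0..1}"
    by (intro has_integral_mult_right has_integral_diff I1 I2)
  then have "((\<lambda>x. (1 / of_nat (Suc b)) * (poly (pderiv Q) x - of_nat (Suc a) * poly (Bp a * Bp (Suc b)) x))
          has_integral 0) {0..1}" by (simp only: mult_zero_right diff_zero)
  moreover have fe: "poly (Bp (Suc a) * Bp b) = (\<lambda>x. (1 / of_nat (Suc b)) * (poly (pderiv Q) x - of_nat (Suc a) * poly (Bp a * Bp (Suc b)) x))"
    by (rule ext) (rule eq)
  ultimately show ?case by (simp only: fe)
qed

lemma bn_even_nonzero: "bn (2 * m) \<noteq> 0" if "m \<ge> 1"
proof
  assume "bn (2 * m) = 0"
  then have "(poly (Bp m * Bp m) has_integral 0) {0..1}"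
    using J_zero[of m m] that by (simp add: mult_2)
  then have "integral {0..1} (poly (Bp m * Bp m)) = 0" by (rule integral_unique)
  moreover have c: "continuous_on {0..1} (\<lambda>x. poly (Bp m * Bp m) x)"
    by (intro continuous_on_poly continuous_on_id)
  ultimately have "\<forall>x\<in>{0..1}. poly (Bp m * Bp m) x = 0"
    using integral_eq_0_iff[OF c, of] by simp
  then have "{0..1::real} \<subseteq> {x. poly (Bp m) x = 0}" by auto
  moreover have "Bp m \<noteq> 0" using coeff_Bp_top[of m] by auto
  then have "finite {x. poly (Bp m) x = 0}" by (rule poly_roots_finite)
  ultimately have "finite {0..1::real}" by (rule finite_subset)
  moreover have "\<not> finite {0::real..1}" by (rule infinite_Icc) simp
  ultimately show False by contradiction
qed

definition Tp :: "nat \<Rightarrow> real poly" where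
  "Tp k = smult (1 / of_nat (Suc k)) (Bp (Suc k) - [:bn (Suc k):])"

lemma poly_Tp: "poly (Tp k) (real n) = (\<Sum>j<n. real j ^ k)"
  unfolding sum_powers_Bp Tp_def poly_smult poly_diff by (simp add: divide_simps)

lemma Tp_at0: "poly (Tp k) 0 = 0"
  by (simp add: Tp_def Bp_at0)

lemma coeff_Tp_1: "coeff (Tp k) 1 = bn k"
  using coeff_Bp_1[of k] by (simp add: Tp_def del: of_nat_Suc)

lemma tail_ineq:
  fixes N m k :: nat and \<sigma> :: real
  assumes "N \<ge> 1" "m \<ge> N + 1" "real k + 4 \<le> \<sigma>"
  shows "real m * (real m powr (-\<sigma>) * real N powr \<sigma>) \<le> (real N / real (N + 1)) ^ k * (real N ^ 4 / real m ^ 3)"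
proof -
  have Npos: "real N > 0" and mpos: "real m > 0" using assms by auto
  define r where "r = real N / real m"
  define q where "q = real N / real (N + 1)"
  have r0: "0 < r" using Npos mpos unfolding r_def by simp
  have "real N / real m \<le> real N / real (N + 1)"
    using assms by (intro divide_left_mono) auto
  then have r: "0 < r" "r \<le> q" using r0 unfolding r_def q_def by auto
  have q: "0 < q" "q \<le> 1" using Npos unfolding q_def by auto
  have "real m powr (-\<sigma>) * real N powr \<sigma> = r powr \<sigma>"
    unfolding r_def using Npos mpos by (simp add: powr_divide powr_minus_divide)
  also have "\<dots> = r powr (\<sigma> - 4) * r powr 4"
    by (simp flip: powr_add)
  also have "r powr 4 = r ^ 4" using r powr_realpow[of r 4] by simp
  also have "r powr (\<sigma> - 4) \<le> q powr (\<sigma> - 4)"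
    using r assms by (intro powr_mono2) auto
  also have "q powr (\<sigma> - 4) \<le> q powr (real k)"
    using q assms by (intro powr_mono') auto
  also have "q powr (real k) = q ^ k" using q by (simp add: powr_realpow)
  finally have "real m powr (-\<sigma>) * real N powr \<sigma> \<le> q ^ k * r ^ 4"
    using r by (simp add: mult_right_mono)
  then have "real m * (real m powr (-\<sigma>) * real N powr \<sigma>) \<le> real m * (q ^ k * r ^ 4)"
    using mpos by (intro mult_left_mono) auto
  also have "real m * (q ^ k * r ^ 4) = q ^ k * (real N ^ 4 / real m ^ 3)"
    unfolding r_def using mpos by (simp add: field_simps power_divide) (simp add: power_Suc power_numeral_reduce field_simps)
  finally show ?thesis unfolding q_def .
qed

lemma dir_unique:
  fixes a :: "nat \<Rightarrow> complex" and F :: "real \<Rightarrow> complex" and C :: real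
  assumes bound: "\<And>n. norm (a n) \<le> C * real n"
    and sums: "\<And>\<sigma>. \<sigma> > 2 \<Longrightarrow> (\<lambda>n. a n * of_real (real n powr -\<sigma>)) sums F \<sigma>"
    and freq: "\<And>x. \<exists>\<sigma>>x. F \<sigma> = 0"
  shows "n \<ge> 1 \<Longrightarrow> a n = 0"
proof (induction n rule: less_induct)
  case (less N)
  have C: "C \<ge> 0" using bound[of 1] norm_ge_zero[of "a 1"] by linarith
  define q where "q = real N / real (N + 1)"
  have q: "0 \<le> q" "q < 1" unfolding q_def by auto
  define K where "K = C * real N ^ 4 * (pi\<^sup>2 / 6)"
  have small: "norm (a N) \<le> K * q ^ k" for k
  proof -
    obtain \<sigma> where \<sigma>: "\<sigma> > real k + 4" "F \<sigma> = 0" using freq[of "real k + 4"] by auto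
    define f where "f n = a n * of_real (real n powr -\<sigma>)" for n
    have fs: "f sums 0" using sums[of \<sigma>] \<sigma> unfolding f_def by auto
    have zero: "f i = 0" if "i < N" for i
    proof (cases "i = 0")
      case True then show ?thesis by (simp add: f_def)
    next
      case False then show ?thesis using less.IH[of i] that by (simp add: f_def)
    qed
    have "(\<Sum>i<Suc N. f i) = f N" using zero by (simp add: sum.lessThan_Suc)
    then have "(\<lambda>i. f (i + Suc N)) sums (- f N)"
      using sums_split_initial_segment[OF fs, of "Suc N"] by simp
    then have "(\<lambda>i. f (i + Suc N) * of_real (real N powr \<sigma>)) sums (- f N * of_real (real N powr \<sigma>))"
      by (rule sums_mult2)
    moreover have "- f N * of_real (real N powr \<sigma>) = - a N"
      using less.prems by (simp add: f_def powr_minus mult.assoc flip: of_real_mult)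
    ultimately have S: "(\<lambda>i. f (i + Suc N) * of_real (real N powr \<sigma>)) sums (- a N)" by simp
    define g where "g i = (C * q ^ k * real N ^ 4) * (1 / (real i + 1)\<^sup>2)" for i
    have gs: "g sums ((C * q ^ k * real N ^ 4) * (pi\<^sup>2 / 6))"
    proof -
      have "(\<lambda>i. 1 / (real i + 1)\<^sup>2) sums (pi\<^sup>2 / 6)"
        using inverse_squares_sums by (simp add: add.commute)
      then show ?thesis unfolding g_def by (rule sums_mult)
    qed
    have le: "norm (f (i + Suc N) * of_real (real N powr \<sigma>)) \<le> g i" for i
    proof -
      define m where "m = i + Suc N"
      have m: "m \<ge> N + 1" "real m \<ge> real i + 1" unfolding m_def by auto
      have "norm (f (i + Suc N) * of_real (real N powr \<sigma>)) = norm (a m) * (real m powr (-\<sigma>) * real N powr \<sigma>)"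
        unfolding f_def m_def by (simp add: norm_mult mult.assoc)
      also have "\<dots> \<le> (C * real m) * (real m powr (-\<sigma>) * real N powr \<sigma>)"
        by (intro mult_right_mono bound) auto
      also have "\<dots> = C * (real m * (real m powr (-\<sigma>) * real N powr \<sigma>))" by simp
      also have "\<dots> \<le> C * (q ^ k * (real N ^ 4 / real m ^ 3))"
        unfolding q_def using tail_ineq[of N m k \<sigma>] less.prems m \<sigma> C by (intro mult_left_mono) auto
      also have "real N ^ 4 / real m ^ 3 \<le> real N ^ 4 * (1 / (real i + 1)\<^sup>2)"
      proof -
        have "(real i + 1)\<^sup>2 \<le> real m ^ 3"
        proof -
          have "(real i + 1)\<^sup>2 \<le> real m ^ 2" using m by (intro power_mono) auto
          also have "\<dots> \<le> real m ^ 3" using m by (intro power_increasing) auto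
          finally show ?thesis .
        qed
        then have "real N ^ 4 / real m ^ 3 \<le> real N ^ 4 / (real i + 1)\<^sup>2"
          by (intro frac_le) auto
        then show ?thesis by simp
      qed
      then have "C * (q ^ k * (real N ^ 4 / real m ^ 3)) \<le> C * (q ^ k * (real N ^ 4 * (1 / (real i + 1)\<^sup>2)))"
        using C q by (intro mult_left_mono) auto
      also have "\<dots> = g i" by (simp add: g_def)
      finally show ?thesis by simp
    qed
    have "norm (a N) = norm (suminf (\<lambda>i. f (i + Suc N) * of_real (real N powr \<sigma>)))"
      using S by (simp add: sums_iff)
    also have "\<dots> \<le> suminf g" using le gs by (intro norm_suminf_le) (auto simp: sums_iff)
    also have "\<dots> = K * q ^ k" using gs by (simp add: sums_iff K_def)
    finally show ?thesis .
  qed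
  have "(\<lambda>k. K * q ^ k) \<longlonglongrightarrow> K * 0"
    by (intro tendsto_mult tendsto_const LIMSEQ_realpow_zero q)
  then have "norm (a N) \<le> K * 0"
    by (rule LIMSEQ_le_const) (use small in auto)
  then show ?case by simp
qed

definition coef :: "nat \<Rightarrow> nat \<Rightarrow> real" where
  "coef c N = (\<Sum>j\<in>{1..<N}. real j ^ c) / real N ^ c"

lemma coef_nonneg: "coef c N \<ge> 0"
  unfolding coef_def by (intro divide_nonneg_nonneg sum_nonneg) auto

lemma coef_le: "coef c N \<le> real N"
proof (cases "N = 0")
  case True then show ?thesis by (simp add: coef_def)
next
  case False
  have "(\<Sum>j\<in>{1..<N}. real j ^ c) \<le> (\<Sum>j\<in>{1..<N}. real N ^ c)"
    by (intro sum_mono power_mono) auto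
  also have "\<dots> = real (N - 1) * real N ^ c" by simp
  also have "\<dots> \<le> real N * real N ^ c" by (intro mult_right_mono) auto
  finally show ?thesis using False unfolding coef_def by (simp add: divide_simps)
qed

lemma DZ:
  fixes \<sigma> :: real
  assumes "\<sigma> > 2"
  shows "(\<lambda>N. complex_of_real (coef c N * real N powr -\<sigma>)) sums dz_series c (of_real \<sigma>)"
proof -
  define g where "g = (\<lambda>(N::nat,j::nat). real j ^ c * real N powr (-(\<sigma> + real c)))"
  define r where "r N = coef c N * real N powr -\<sigma>" for N
  have inner: "((\<lambda>j. g (N,j)) has_sum r N) {1..<N}" for N
  proof -
    have "(\<Sum>j\<in>{1..<N}. g (N,j)) = r N"
    proof (cases "N = 0")
      case True then show ?thesis by (simp add: r_def coef_def)
    next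
      case False
      have "real N powr (-(\<sigma> + real c)) = real N powr (-\<sigma>) * real N powr (- real c)"
        by (simp add: powr_add[symmetric])
      also have "real N powr (- real c) = inverse (real N ^ c)"
        using False by (simp add: powr_minus powr_realpow)
      finally have "real N powr (-(\<sigma> + real c)) = real N powr -\<sigma> / real N ^ c"
        by (simp add: divide_inverse)
      then show ?thesis unfolding g_def r_def coef_def
        by (simp add: sum_distrib_right sum_divide_distrib mult.assoc)
    qed
    then show ?thesis using has_sum_finite[of "{1..<N}" "\<lambda>j. g (N,j)"] by simp
  qed
  have r_nonneg: "r N \<ge> 0" for N unfolding r_def using coef_nonneg by simp
  have r_le: "norm (r N) \<le> real N powr (1 - \<sigma>)" for N
  proof -
    have "r N \<le> real N * real N powr -\<sigma>"
      unfolding r_def by (intro mult_right_mono coef_le) auto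
    also have "\<dots> = real N powr (1 - \<sigma>)" by (simp add: powr_mult_base)
    finally show ?thesis using r_nonneg by simp
  qed
  have "summable (\<lambda>N. real N powr (1 - \<sigma>))"
    using assms by (subst summable_real_powr_iff) auto
  then have rsum: "summable r"
    using r_le by (intro summable_comparison_test[of r "\<lambda>N. real N powr (1 - \<sigma>)"]) auto
  define S where "S = suminf r"
  have rS: "(r has_sum S) UNIV"
    unfolding S_def using rsum r_nonneg by (intro sums_nonneg_imp_has_sum summable_sums)
  have gsum: "g summable_on Sigma UNIV (\<lambda>N. {1..<N})"
    by (rule summable_on_SigmaI[OF inner]) (use rS in \<open>auto simp: g_def summable_on_def\<close>)
  have gS: "(g has_sum S) (Sigma UNIV (\<lambda>N. {1..<N}))"
    by (rule has_sum_SigmaI[OF inner rS gsum])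
  define h where "h = (\<lambda>(m::nat,n::nat). real m ^ c * real (m + n) powr (-(\<sigma> + real c)))"
  have hS: "(h has_sum S) ({1..} \<times> {1..})"
  proof -
    have "(g has_sum S) (Sigma UNIV (\<lambda>N. {1..<N})) = (h has_sum S) ({1..} \<times> {1..})"
      by (rule has_sum_reindex_bij_witness[where j = "\<lambda>(N,j). (j, N - j)" and i = "\<lambda>(m,n). (m + n, m)"])
         (auto simp: g_def h_def)
    then show ?thesis using gS by simp
  qed
  have "((\<lambda>p. complex_of_real (h p)) has_sum of_real S) ({1..} \<times> {1..})"
    by (rule has_sum_of_real[OF hS])
  moreover have "complex_of_real (h p) = (case p of (m, n) \<Rightarrow>
        of_nat m ^ c * of_nat (m + n) powr (- (complex_of_real \<sigma> + of_nat c)))" for p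
  proof -
    obtain m n where p: "p = (m, n)" by (cases p)
    have "of_nat (m + n) powr (- (complex_of_real \<sigma> + of_nat c)) =
          of_real (real (m + n)) powr of_real (-(\<sigma> + real c))" by simp
    also have "\<dots> = of_real (real (m + n) powr (-(\<sigma> + real c)))"
      by (rule powr_of_real) simp
    finally show ?thesis unfolding p h_def by simp
  qed
  ultimately have "((\<lambda>(m, n). of_nat m ^ c * of_nat (m + n) powr (- (complex_of_real \<sigma> + of_nat c)))
        has_sum of_real S) ({1..} \<times> {1..})" by simp
  then have "dz_series c (of_real \<sigma>) = of_real S"
    unfolding dz_series_def by (rule infsumI)
  moreover have "(\<lambda>N. complex_of_real (r N)) sums of_real S"
    unfolding S_def using rsum by (intro sums_of_real summable_sums)
  ultimately show ?thesis unfolding r_def by simp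
qed

lemma poly_of_real_map: "poly (map_poly of_real p) (complex_of_real x) = of_real (poly p x)"
  by (induction p) (auto simp: map_poly_pCons)

lemma coef_poly:
  assumes "k \<ge> 1" "N \<ge> 1"
  shows "complex_of_real (coef k N) = poly (map_poly of_real (Tp k)) (of_nat N) / of_nat N ^ k"
proof -
  have "(\<Sum>j\<in>{1..<N}. real j ^ k) = (\<Sum>j<N. real j ^ k)"
  proof -
    have "{..<N} = insert 0 {1..<N}" using assms by auto
    then show ?thesis using assms by simp
  qed
  then have "coef k N = poly (Tp k) (real N) / real N ^ k"
    unfolding coef_def poly_Tp by simp
  then show ?thesis using poly_of_real_map[of "Tp k" "real N"] by simp
qed

lemma coef0: "N \<ge> 1 \<Longrightarrow> coef 0 N = real N - 1"
  by (simp add: coef_def of_nat_diff)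

theorem corollary5p1:
  fixes m :: nat and Z :: "nat \<Rightarrow> complex \<Rightarrow> complex"
  assumes "m > 0"
    and "\<And>c. c \<le> 2 * m \<Longrightarrow> is_dz_continuation c (Z c)"
  shows "\<not> (\<exists>cs :: nat \<Rightarrow> complex. \<forall>z. \<forall>\<^sub>F s in at z.
            Z (2 * m) s + (\<Sum>k = 1..2 * m - 1. cs k * Z k s) + cs 0 * Z 0 s / 2 = 0)"
proof
  assume "\<exists>cs :: nat \<Rightarrow> complex. \<forall>z. \<forall>\<^sub>F s in at z.
            Z (2 * m) s + (\<Sum>k = 1..2 * m - 1. cs k * Z k s) + cs 0 * Z 0 s / 2 = 0"
  then obtain cs :: "nat \<Rightarrow> complex" where ev: "\<And>z. \<forall>\<^sub>F s in at z.
            Z (2 * m) s + (\<Sum>k = 1..2 * m - 1. cs k * Z k s) + cs 0 * Z 0 s / 2 = 0" by blast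
  define M where "M = 2 * m"
  have M2: "M \<ge> 2" using assms(1) unfolding M_def by simp
  define E where "E s = Z M s + (\<Sum>k = 1..M - 1. cs k * Z k s) + cs 0 * Z 0 s / 2" for s
  define a where "a N = complex_of_real (coef M N) + (\<Sum>k = 1..M - 1. cs k * of_real (coef k N))
      + cs 0 * of_real (coef 0 N) / 2" for N
  have ev': "\<forall>\<^sub>F s in at z. E s = 0" for z using ev[of z] unfolding E_def M_def .
  have Zdz: "Z c (of_real \<sigma>) = dz_series c (of_real \<sigma>)" if "c \<le> M" "\<sigma> > 2" for c \<sigma>
    using assms(2)[of c] that unfolding is_dz_continuation_def M_def by auto
  have sums: "(\<lambda>N. a N * of_real (real N powr -\<sigma>)) sums E (of_real \<sigma>)" if "\<sigma> > 2" for \<sigma>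
  proof -
    have D: "(\<lambda>N. complex_of_real (coef c N * real N powr -\<sigma>)) sums Z c (of_real \<sigma>)" if "c \<le> M" for c
      using DZ[OF \<open>\<sigma> > 2\<close>, of c] Zdz[OF that \<open>\<sigma> > 2\<close>] by simp
    have s1: "(\<lambda>N. \<Sum>k = 1..M - 1. cs k * complex_of_real (coef k N * real N powr -\<sigma>))
              sums (\<Sum>k = 1..M - 1. cs k * Z k (of_real \<sigma>))"
      by (intro sums_sum sums_mult D) auto
    have s2: "(\<lambda>N. cs 0 * complex_of_real (coef 0 N * real N powr -\<sigma>) / 2) sums (cs 0 * Z 0 (of_real \<sigma>) / 2)"
      by (intro sums_divide sums_mult D) auto
    have "(\<lambda>N. complex_of_real (coef M N * real N powr -\<sigma>) +
              (\<Sum>k = 1..M - 1. cs k * complex_of_real (coef k N * real N powr -\<sigma>)) +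
              cs 0 * complex_of_real (coef 0 N * real N powr -\<sigma>) / 2) sums E (of_real \<sigma>)"
      unfolding E_def by (intro sums_add s1 s2 D) auto
    moreover have "complex_of_real (coef M N * real N powr -\<sigma>) +
              (\<Sum>k = 1..M - 1. cs k * complex_of_real (coef k N * real N powr -\<sigma>)) +
              cs 0 * complex_of_real (coef 0 N * real N powr -\<sigma>) / 2 = a N * of_real (real N powr -\<sigma>)" for N
    proof -
      have "(\<Sum>k = 1..M - 1. cs k * complex_of_real (coef k N * real N powr -\<sigma>)) =
            (\<Sum>k = 1..M - 1. cs k * complex_of_real (coef k N)) * of_real (real N powr -\<sigma>)"
        unfolding sum_distrib_right of_real_mult by (intro sum.cong refl) (simp add: mult_ac)
      then show ?thesis unfolding a_def by (simp add: algebra_simps)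
    qed
    ultimately show ?thesis by simp
  qed
  define Cb where "Cb = 1 + (\<Sum>k = 1..M - 1. norm (cs k)) + norm (cs 0) / 2"
  have bound: "norm (a N) \<le> Cb * real N" for N
  proof -
    have n: "norm (complex_of_real (coef c N)) \<le> real N" for c
      using coef_le[of c N] coef_nonneg[of c N] by simp
    have n': "\<bar>coef c N\<bar> \<le> real N" for c
      using coef_le[of c N] coef_nonneg[of c N] by simp
    have "norm (a N) \<le> norm (complex_of_real (coef M N)) + norm (\<Sum>k = 1..M - 1. cs k * of_real (coef k N))
      + norm (cs 0 * of_real (coef 0 N) / 2)"
      unfolding a_def by (intro order.trans[OF norm_triangle_ineq] add_mono order.refl)
    also have "\<dots> \<le> real N + (\<Sum>k = 1..M - 1. norm (cs k) * real N) + norm (cs 0) * real N / 2"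
    proof (intro add_mono)
      show "norm (\<Sum>k = 1..M - 1. cs k * complex_of_real (coef k N)) \<le> (\<Sum>k = 1..M - 1. norm (cs k) * real N)"
        by (intro order.trans[OF norm_sum] sum_mono) (auto simp: norm_mult intro!: mult_left_mono n')
      show "norm (cs 0 * complex_of_real (coef 0 N) / 2) \<le> norm (cs 0) * real N / 2"
        using n[of 0] by (simp add: norm_mult norm_divide mult_left_mono)
    qed (rule n)
    also have "\<dots> = Cb * real N" unfolding Cb_def by (simp add: algebra_simps sum_distrib_left)
    finally show ?thesis .
  qed
  have freq: "\<exists>\<sigma>>x. E (of_real \<sigma>) = 0" for x
  proof -
    define x0 where "x0 = max x 3"
    obtain d where d: "d > 0" "\<And>s. s \<noteq> of_real x0 \<Longrightarrow> dist s (of_real x0) < d \<Longrightarrow> E s = 0"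
      using ev'[of "of_real x0"] unfolding eventually_at by auto
    have "E (of_real (x0 + d / 2)) = 0"
      using d by (intro d(2)) (auto simp: dist_norm simp flip: of_real_diff)
    moreover have "x0 + d / 2 > x" using d unfolding x0_def by auto
    ultimately show ?thesis by blast
  qed
  have a0: "a N = 0" if "N \<ge> 1" for N
    by (rule dir_unique[OF bound sums freq that]) auto
  define Tc where "Tc k = map_poly complex_of_real (Tp k)" for k
  define H where "H = Tc M + (\<Sum>k = 1..M - 1. smult (cs k) (monom 1 (M - k) * Tc k))
      + smult (cs 0 / 2) (monom 1 M * [:-1, 1:])"
  have Hroot: "poly H (of_nat N) = 0" if "N \<ge> 1" for N
  proof -
    have Npos: "(of_nat N :: complex) \<noteq> 0" using that by simp
    have c: "complex_of_real (coef k N) = poly (Tc k) (of_nat N) / of_nat N ^ k" if "k \<ge> 1" for k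
      using coef_poly[OF that \<open>N \<ge> 1\<close>] unfolding Tc_def .
    have "of_nat N ^ M * a N = poly H (of_nat N)"
    proof -
      have "of_nat N ^ M * a N = of_nat N ^ M * complex_of_real (coef M N) +
         (\<Sum>k = 1..M - 1. cs k * (of_nat N ^ M * of_real (coef k N))) + cs 0 / 2 * (of_nat N ^ M * of_real (coef 0 N))"
        unfolding a_def by (simp add: algebra_simps sum_distrib_left)
      also have "of_nat N ^ M * complex_of_real (coef M N) = poly (Tc M) (of_nat N)"
        using c[of M] M2 Npos by simp
      also have "(\<Sum>k = 1..M - 1. cs k * (of_nat N ^ M * of_real (coef k N))) =
          (\<Sum>k = 1..M - 1. cs k * (of_nat N ^ (M - k) * poly (Tc k) (of_nat N)))"
      proof (intro sum.cong refl)
        fix k assume k: "k \<in> {1..M - 1}"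
        have "(of_nat N :: complex) ^ M = of_nat N ^ (M - k) * of_nat N ^ k"
        proof -
          have "M = (M - k) + k" using k by auto
          then show ?thesis by (metis power_add)
        qed
        then show "cs k * (of_nat N ^ M * of_real (coef k N)) = cs k * (of_nat N ^ (M - k) * poly (Tc k) (of_nat N))"
          using c[of k] k Npos by simp
      qed
      also have "complex_of_real (coef 0 N) = of_nat N - 1"
        using coef0[OF that] by simp
      finally show ?thesis
        unfolding H_def by (simp add: poly_sum poly_monom algebra_simps)
    qed
    then show ?thesis using a0[OF that] by simp
  qed
  have "H = 0"
  proof (rule ccontr)
    assume "H \<noteq> 0"
    then have fin: "finite {x. poly H x = 0}" by (rule poly_roots_finite)
    have "of_nat ` {1..} \<subseteq> {x. poly H x = 0}" using Hroot by auto
    then have "finite ((of_nat :: nat \<Rightarrow> complex) ` {1..})" using fin by (rule finite_subset)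
    then have "finite {1::nat..}" by (rule finite_imageD) (auto simp: inj_on_def)
    then show False using infinite_Ici[of "1::nat"] by contradiction
  qed
  then have "coeff H 1 = 0" by simp
  moreover have "coeff H 1 = of_real (bn M)"
  proof -
    have t1: "coeff (Tc M) 1 = of_real (bn M)"
      unfolding Tc_def using coeff_Tp_1[of M] by (simp add: coeff_map_poly)
    have t2: "coeff (monom 1 (M - k) * Tc k) 1 = 0" if "k \<in> {1..M - 1}" for k
    proof -
      have "coeff (Tc k) 0 = 0" unfolding Tc_def
        using Tp_at0[of k] by (simp add: coeff_map_poly poly_0_coeff_0)
      then show ?thesis using that by (auto simp: coeff_monom_mult)
    qed
    have t3: "coeff (monom 1 M * [:-1, 1:]) 1 = (0 :: complex)"
      using M2 by (simp add: coeff_monom_mult)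
    show ?thesis unfolding H_def using t1 t2 t3 by (simp add: coeff_sum)
  qed
  ultimately have "bn M = 0" by simp
  moreover have "bn M \<noteq> 0" unfolding M_def using assms(1) by (intro bn_even_nonzero) simp
  ultimately show False by contradiction
qed

end
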